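(* Let $(X_t)_{t\in\mathbb{N}}$ be i.i.d. real random variables on a probability space $(\Omega,\mathcal{F},\mathbb{P})$ with $\mathbb{E}[|X_1|]<\infty$ and $\mathbb{E}[X_1]=0$, and let $r(K)=\mathbb{E}\big[|X_1|\mathbf{1}_{\{|X_1|>K\}}\big]$ for $K\ge0$. (i) For every $\varepsilon>0$ and every $\gamma\ge1$ with $r(\gamma^{1/3})\le\varepsilon$, $$\mathbb{P}\Big(\sup_{t\in\mathbb{N}}\frac{1}{\gamma+t}\Big|\sum_{s=1}^tX_s\Big|>2\varepsilon\Big)\le \frac{8}{\varepsilon^2}\gamma^{-1/3}+\Big(\frac{16}{\varepsilon^2}+2\Big)r(\gamma^{1/3}).$$ (ii) For every $\varepsilon>0$ and every $k\in\mathbb{N}$ with $r(k^{1/3})\le\varepsilon$, $$\mathbb{P}\Big(\frac1k\Big|\sum_{s=1}^kX_s\Big|>\varepsilon\Big)\le\frac{128}{\varepsilon^2}k^{-1/3}+\Big(\frac{256}{\varepsilon^2}+2\Big)r(k^{1/3}).$$ *)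

theory Defs
  imports "HOL-Probability.Probability"
begin

definition tail_moment :: "'a measure \<Rightarrow> ('a \<Rightarrow> real) \<Rightarrow> real \<Rightarrow> real" where
  "tail_moment M Y K = (\<integral>\<omega>. \<bar>Y \<omega>\<bar> * indicator {\<omega>. \<bar>Y \<omega>\<bar> > K} \<omega> \<partial>M)"

end

theory Submission
  imports Defs
begin


lemma (in prob_space) cross_zero:
  fixes U :: "nat \<Rightarrow> 'a \<Rightarrow> real" and g :: "(nat \<Rightarrow> real) \<Rightarrow> real"
  assumes indep: "indep_vars (\<lambda>_. borel) U UNIV"
    and meas: "\<And>s. U s \<in> borel_measurable M"
    and intU: "\<And>s. s \<in> {Suc k..i} \<Longrightarrow> integrable M (U s)"
    and mean0: "\<And>s. s \<in> {Suc k..i} \<Longrightarrow> expectation (U s) = 0"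
    and gm: "g \<in> borel_measurable (PiM {1..k} (\<lambda>_. borel))"
    and gi: "integrable M (\<lambda>\<omega>. g (restrict (\<lambda>j. U j \<omega>) {1..k}))"
  shows "expectation (\<lambda>\<omega>. g (restrict (\<lambda>j. U j \<omega>) {1..k}) * (\<Sum>s\<in>{Suc k..i}. U s \<omega>)) = 0"
proof -
  have iv: "indep_var borel (g \<circ> (\<lambda>\<omega>. restrict (\<lambda>j. U j \<omega>) {1..k}))
      borel ((\<lambda>f. \<Sum>s\<in>{Suc k..i}. f s) \<circ> (\<lambda>\<omega>. restrict (\<lambda>j. U j \<omega>) {Suc k..i}))"
    by (intro indep_var_compose[OF indep_var_restrict[OF indep]] gm) auto
  have e1: "(g \<circ> (\<lambda>\<omega>. restrict (\<lambda>j. U j \<omega>) {1..k})) = (\<lambda>\<omega>. g (restrict (\<lambda>j. U j \<omega>) {1..k}))"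
    by auto
  have e2: "((\<lambda>f. \<Sum>s\<in>{Suc k..i}. f s) \<circ> (\<lambda>\<omega>. restrict (\<lambda>j. U j \<omega>) {Suc k..i})) = (\<lambda>\<omega>. \<Sum>s\<in>{Suc k..i}. U s \<omega>)"
    by (auto intro!: sum.cong)
  have iv': "indep_var borel (\<lambda>\<omega>. g (restrict (\<lambda>j. U j \<omega>) {1..k})) borel (\<lambda>\<omega>. \<Sum>s\<in>{Suc k..i}. U s \<omega>)"
    using iv unfolding e1 e2 .
  have "expectation (\<lambda>\<omega>. g (restrict (\<lambda>j. U j \<omega>) {1..k}) * (\<Sum>s\<in>{Suc k..i}. U s \<omega>))
     = expectation (\<lambda>\<omega>. g (restrict (\<lambda>j. U j \<omega>) {1..k})) * expectation (\<lambda>\<omega>. \<Sum>s\<in>{Suc k..i}. U s \<omega>)"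
    by (rule indep_var_lebesgue_integral[OF iv' gi]) (use intU in auto)
  also have "expectation (\<lambda>\<omega>. \<Sum>s\<in>{Suc k..i}. U s \<omega>) = 0"
    using intU mean0 by (subst Bochner_Integration.integral_sum) auto
  finally show ?thesis by (simp only: mult_zero_right)
qed

lemma (in prob_space) bint:
  fixes f :: "'a \<Rightarrow> real"
  assumes "f \<in> borel_measurable M" "\<And>\<omega>. \<omega> \<in> space M \<Longrightarrow> \<bar>f \<omega>\<bar> \<le> C"
  shows "integrable M f"
  using assms by (intro integrable_const_bound[where B=C]) auto

lemma abs_mult_le1: "\<bar>x\<bar> \<le> 1 \<Longrightarrow> \<bar>y\<bar> \<le> C \<Longrightarrow> \<bar>x * y\<bar> \<le> (C::real)"
  using mult_right_mono[of "\<bar>x\<bar>" 1 "\<bar>y\<bar>"] by (simp add: abs_mult)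

lemma sq_le_abs: "\<bar>y\<bar> \<le> C \<Longrightarrow> y\<^sup>2 \<le> (C::real)\<^sup>2"
  by (metis abs_ge_zero power2_abs power_mono)

lemma sum_split_nat: "k \<le> i \<Longrightarrow> (\<Sum>s=1..i. f s) = (\<Sum>s=1..k. f s) + (\<Sum>s=Suc k..i. (f s::real))"
proof (induction i)
  case 0 then show ?case by simp
next
  case (Suc i)
  show ?case
  proof (cases "k = Suc i")
    case True then show ?thesis by simp
  next
    case False
    then have "k \<le> i" using Suc.prems by simp
    then show ?thesis using Suc.IH by (simp add: atLeastAtMostSuc_conv)
  qed
qed

lemma (in prob_space) cross2:
  fixes U :: "nat \<Rightarrow> 'a \<Rightarrow> real" and h :: "(nat \<Rightarrow> real) \<Rightarrow> real"
  assumes indep: "indep_vars (\<lambda>_. borel) U UNIV"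
    and meas: "\<And>s. U s \<in> borel_measurable M"
    and B: "0 \<le> B" and bnd: "\<And>s \<omega>. s \<in> {1..n} \<Longrightarrow> \<omega> \<in> space M \<Longrightarrow> \<bar>U s \<omega>\<bar> \<le> B"
    and mean0: "\<And>s. s \<in> {1..n} \<Longrightarrow> expectation (U s) = 0"
    and ki: "k \<le> i" "i \<le> n"
    and hm: "h \<in> borel_measurable (PiM {1..k} (\<lambda>_. borel))"
    and h01: "\<And>f. 0 \<le> h f" "\<And>f. h f \<le> 1"
  shows "expectation (\<lambda>\<omega>. h (restrict (\<lambda>j. U j \<omega>) {1..k}) * (\<Sum>s=1..k. U s \<omega>)\<^sup>2)
      \<le> expectation (\<lambda>\<omega>. h (restrict (\<lambda>j. U j \<omega>) {1..k}) * (\<Sum>s=1..i. U s \<omega>)\<^sup>2)"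
proof -
  note [measurable] = meas hm
  define H where "H \<omega> = h (restrict (\<lambda>j. U j \<omega>) {1..k})" for \<omega>
  have Hm[measurable]: "H \<in> borel_measurable M"
    unfolding H_def by (rule measurable_compose[OF _ hm]) (auto intro!: measurable_restrict)
  define Sk where "Sk \<omega> = (\<Sum>s=1..k. U s \<omega>)" for \<omega>
  define R where "R \<omega> = (\<Sum>s=Suc k..i. U s \<omega>)" for \<omega>
  have Si: "(\<Sum>s=1..i. U s \<omega>) = Sk \<omega> + R \<omega>" for \<omega>
    unfolding Sk_def R_def by (rule sum_split_nat[OF ki(1)])
  have sumb: "\<bar>\<Sum>s\<in>A. U s \<omega>\<bar> \<le> real n * B" if "A \<subseteq> {1..n}" "\<omega> \<in> space M" for A \<omega>
  proof -
    have fA: "finite A" using that finite_subset by blast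
    have "\<bar>\<Sum>s\<in>A. U s \<omega>\<bar> \<le> (\<Sum>s\<in>A. \<bar>U s \<omega>\<bar>)" by (rule sum_abs)
    also have "\<dots> \<le> (\<Sum>s\<in>A. B)" using that bnd by (intro sum_mono) auto
    also have "\<dots> = real (card A) * B" by simp
    also have "\<dots> \<le> real n * B"
      using card_mono[OF _ that(1)] B by (intro mult_right_mono) auto
    finally show ?thesis .
  qed
  have Skb: "\<bar>Sk \<omega>\<bar> \<le> real n * B" if "\<omega> \<in> space M" for \<omega>
    unfolding Sk_def using ki that by (intro sumb) auto
  have Rb: "\<bar>R \<omega>\<bar> \<le> real n * B" if "\<omega> \<in> space M" for \<omega>
    unfolding R_def using ki that by (intro sumb) auto
  have Hb: "\<bar>H \<omega>\<bar> \<le> 1" for \<omega> unfolding H_def using h01 by (simp add: abs_le_iff)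
  have [measurable]: "Sk \<in> borel_measurable M" "R \<in> borel_measurable M"
    unfolding Sk_def R_def by measurable
  have intU: "integrable M (U s)" if "s \<in> {Suc k..i}" for s
    using that ki by (intro bint[where C=B]) (auto intro!: bnd)
  have iHSk: "integrable M (\<lambda>\<omega>. H \<omega> * Sk \<omega>)"
  proof (rule bint[where C="real n * B"])
    fix \<omega> assume "\<omega> \<in> space M"
    then show "\<bar>H \<omega> * Sk \<omega>\<bar> \<le> real n * B"
      using Hb[of \<omega>] Skb[of \<omega>] by (intro abs_mult_le1) auto
  qed measurable
  have gm: "(\<lambda>f. h f * (\<Sum>s=1..k. f s)) \<in> borel_measurable (PiM {1..k} (\<lambda>_. borel))"
    by measurable
  have cz: "expectation (\<lambda>\<omega>. H \<omega> * Sk \<omega> * R \<omega>) = 0"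
  proof -
    have X: "expectation (\<lambda>\<omega>. h (restrict (\<lambda>j. U j \<omega>) {1..k}) * (\<Sum>s=1..k. restrict (\<lambda>j. U j \<omega>) {1..k} s) * (\<Sum>s\<in>{Suc k..i}. U s \<omega>)) = 0"
    proof (rule cross_zero[OF indep meas intU _ gm])
      have e: "(\<lambda>\<omega>. h (restrict (\<lambda>j. U j \<omega>) {1..k}) * (\<Sum>s=1..k. restrict (\<lambda>j. U j \<omega>) {1..k} s)) = (\<lambda>\<omega>. H \<omega> * Sk \<omega>)"
        unfolding H_def Sk_def by (auto intro!: sum.cong)
      show "integrable M (\<lambda>\<omega>. h (restrict (\<lambda>j. U j \<omega>) {1..k}) * (\<Sum>s=1..k. restrict (\<lambda>j. U j \<omega>) {1..k} s))"
        unfolding e by (rule iHSk)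
    next
      fix s assume "s \<in> {Suc k..i}"
      then show "expectation (U s) = 0" using ki by (intro mean0) auto
    qed
    moreover have "(\<lambda>\<omega>. h (restrict (\<lambda>j. U j \<omega>) {1..k}) * (\<Sum>s=1..k. restrict (\<lambda>j. U j \<omega>) {1..k} s) * (\<Sum>s\<in>{Suc k..i}. U s \<omega>)) = (\<lambda>\<omega>. H \<omega> * Sk \<omega> * R \<omega>)"
      unfolding H_def Sk_def R_def by (intro ext arg_cong2[where f="(*)"] refl sum.cong) auto
    ultimately show ?thesis by (simp only:)
  qed
  have iS2: "integrable M (\<lambda>\<omega>. H \<omega> * (Sk \<omega>)\<^sup>2)"
  proof (rule bint[where C="(real n * B)^2"])
    fix \<omega> assume "\<omega> \<in> space M"
    then show "\<bar>H \<omega> * (Sk \<omega>)\<^sup>2\<bar> \<le> (real n * B)^2"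
      using Hb[of \<omega>] sq_le_abs[OF Skb[of \<omega>]] by (intro abs_mult_le1) auto
  qed measurable
  have iS2': "integrable M (\<lambda>\<omega>. H \<omega> * (Sk \<omega> + R \<omega>)\<^sup>2)"
  proof (rule bint[where C="(2 * real n * B)^2"])
    fix \<omega> assume w: "\<omega> \<in> space M"
    have "\<bar>Sk \<omega> + R \<omega>\<bar> \<le> 2 * real n * B" using Skb[OF w] Rb[OF w] by linarith
    then have "(Sk \<omega> + R \<omega>)\<^sup>2 \<le> (2 * real n * B)^2" by (rule sq_le_abs)
    then show "\<bar>H \<omega> * (Sk \<omega> + R \<omega>)\<^sup>2\<bar> \<le> (2 * real n * B)^2"
      using Hb[of \<omega>] by (intro abs_mult_le1) auto
  qed measurable
  have iX: "integrable M (\<lambda>\<omega>. H \<omega> * Sk \<omega> * R \<omega>)"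
  proof (rule bint[where C="real n * B * (real n * B)"])
    fix \<omega> assume w: "\<omega> \<in> space M"
    have "\<bar>H \<omega> * Sk \<omega>\<bar> \<le> real n * B"
      using Hb[of \<omega>] Skb[OF w] by (intro abs_mult_le1) auto
    then show "\<bar>H \<omega> * Sk \<omega> * R \<omega>\<bar> \<le> real n * B * (real n * B)"
    proof -
      have "\<bar>H \<omega> * Sk \<omega> * R \<omega>\<bar> = \<bar>H \<omega> * Sk \<omega>\<bar> * \<bar>R \<omega>\<bar>" by (rule abs_mult)
      also have "\<dots> \<le> real n * B * (real n * B)"
        using \<open>\<bar>H \<omega> * Sk \<omega>\<bar> \<le> real n * B\<close> Rb[OF w] by (intro mult_mono) auto
      finally show ?thesis .
    qed
  qed measurable
  have "expectation (\<lambda>\<omega>. H \<omega> * (Sk \<omega>)\<^sup>2) = expectation (\<lambda>\<omega>. H \<omega> * (Sk \<omega>)\<^sup>2 + 2 * (H \<omega> * Sk \<omega> * R \<omega>))"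
    using iS2 iX cz by (simp add: Bochner_Integration.integral_add)
  also have "\<dots> \<le> expectation (\<lambda>\<omega>. H \<omega> * (Sk \<omega> + R \<omega>)\<^sup>2)"
  proof (rule integral_mono)
    show "integrable M (\<lambda>\<omega>. H \<omega> * (Sk \<omega>)\<^sup>2 + 2 * (H \<omega> * Sk \<omega> * R \<omega>))" using iS2 iX by auto
    show "integrable M (\<lambda>\<omega>. H \<omega> * (Sk \<omega> + R \<omega>)\<^sup>2)" by (rule iS2')
    fix \<omega>
    have "H \<omega> * (Sk \<omega> + R \<omega>)\<^sup>2 - (H \<omega> * (Sk \<omega>)\<^sup>2 + 2 * (H \<omega> * Sk \<omega> * R \<omega>)) = H \<omega> * (R \<omega>)\<^sup>2"
      by (simp add: power2_eq_square algebra_simps)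
    moreover have "0 \<le> H \<omega> * (R \<omega>)\<^sup>2" using h01 unfolding H_def by simp
    ultimately show "H \<omega> * (Sk \<omega>)\<^sup>2 + 2 * (H \<omega> * Sk \<omega> * R \<omega>) \<le> H \<omega> * (Sk \<omega> + R \<omega>)\<^sup>2" by linarith
  qed
  finally show ?thesis unfolding H_def Sk_def R_def Si[unfolded Sk_def R_def] .
qed


lemma sum_bound_gen:
  fixes U :: "nat \<Rightarrow> 'a \<Rightarrow> real"
  assumes "A \<subseteq> {1..n}" "0 \<le> B" "\<And>s. s \<in> {1..n} \<Longrightarrow> \<bar>U s \<omega>\<bar> \<le> B"
  shows "\<bar>\<Sum>s\<in>A. U s \<omega>\<bar> \<le> real n * B"
proof -
  have fA: "finite A" using assms finite_subset by blast
  have "\<bar>\<Sum>s\<in>A. U s \<omega>\<bar> \<le> (\<Sum>s\<in>A. \<bar>U s \<omega>\<bar>)" by (rule sum_abs)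
  also have "\<dots> \<le> (\<Sum>s\<in>A. B)" using assms by (intro sum_mono) auto
  also have "\<dots> = real (card A) * B" by simp
  also have "\<dots> \<le> real n * B"
    using card_mono[OF _ assms(1)] assms(2) by (intro mult_right_mono) auto
  finally show ?thesis .
qed

lemma (in prob_space) var_sum:
  fixes U :: "nat \<Rightarrow> 'a \<Rightarrow> real"
  assumes indep: "indep_vars (\<lambda>_. borel) U UNIV"
    and meas: "\<And>s. U s \<in> borel_measurable M"
    and B: "0 \<le> B" and bnd: "\<And>s \<omega>. s \<in> {1..n} \<Longrightarrow> \<omega> \<in> space M \<Longrightarrow> \<bar>U s \<omega>\<bar> \<le> B"
    and mean0: "\<And>s. s \<in> {1..n} \<Longrightarrow> expectation (U s) = 0"
  shows "i \<le> n \<Longrightarrow> expectation (\<lambda>\<omega>. (\<Sum>s=1..i. U s \<omega>)\<^sup>2) = (\<Sum>s=1..i. expectation (\<lambda>\<omega>. (U s \<omega>)\<^sup>2))"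
proof (induction i)
  case 0 then show ?case by simp
next
  case (Suc i)
  note [measurable] = meas
  define S where "S \<omega> = (\<Sum>s=1..i. U s \<omega>)" for \<omega>
  have [measurable]: "S \<in> borel_measurable M" unfolding S_def by measurable
  have Sb: "\<bar>S \<omega>\<bar> \<le> real n * B" if "\<omega> \<in> space M" for \<omega>
    unfolding S_def using Suc.prems that by (intro sum_bound_gen[OF _ B]) (auto intro!: bnd)
  have Ub: "\<bar>U (Suc i) \<omega>\<bar> \<le> B" if "\<omega> \<in> space M" for \<omega>
    using Suc.prems that by (intro bnd) auto
  have e: "(\<Sum>s=1..Suc i. U s \<omega>)\<^sup>2 = (S \<omega>)\<^sup>2 + 2 * (S \<omega> * U (Suc i) \<omega>) + (U (Suc i) \<omega>)\<^sup>2" for \<omega>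
    unfolding S_def by (simp add: power2_eq_square algebra_simps)
  have i1: "integrable M (\<lambda>\<omega>. (S \<omega>)\<^sup>2)"
    by (rule bint[where C="(real n * B)\<^sup>2"]) (auto intro!: sq_le_abs Sb)
  have i2: "integrable M (\<lambda>\<omega>. S \<omega> * U (Suc i) \<omega>)"
  proof (rule bint[where C="real n * B * B"])
    fix \<omega> assume w: "\<omega> \<in> space M"
    show "\<bar>S \<omega> * U (Suc i) \<omega>\<bar> \<le> real n * B * B"
      unfolding abs_mult using Sb[OF w] Ub[OF w] by (intro mult_mono) auto
  qed measurable
  have i3: "integrable M (\<lambda>\<omega>. (U (Suc i) \<omega>)\<^sup>2)"
    by (rule bint[where C="B\<^sup>2"]) (auto intro!: sq_le_abs Ub)
  have cz: "expectation (\<lambda>\<omega>. S \<omega> * U (Suc i) \<omega>) = 0"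
  proof -
    have gm: "(\<lambda>f::nat\<Rightarrow>real. \<Sum>s=1..i. f s) \<in> borel_measurable (PiM {1..i} (\<lambda>_. borel))" by measurable
    have eq: "(\<lambda>\<omega>. \<Sum>s=1..i. restrict (\<lambda>j. U j \<omega>) {1..i} s) = S"
      unfolding S_def by (intro ext sum.cong) auto
    have X: "expectation (\<lambda>\<omega>. (\<Sum>s=1..i. restrict (\<lambda>j. U j \<omega>) {1..i} s) * (\<Sum>s\<in>{Suc i..Suc i}. U s \<omega>)) = 0"
    proof (rule cross_zero[OF indep meas _ _ gm])
      show "integrable M (\<lambda>\<omega>. \<Sum>s=1..i. restrict (\<lambda>j. U j \<omega>) {1..i} s)"
        unfolding eq by (rule bint[where C="real n * B"]) (auto intro!: Sb)
    next
      fix s assume "s \<in> {Suc i..Suc i}"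
      then have "s = Suc i" by simp
      then show "integrable M (U s)" using Ub by (intro bint[where C=B]) auto
    next
      fix s assume "s \<in> {Suc i..Suc i}"
      then show "expectation (U s) = 0" using Suc.prems by (intro mean0) auto
    qed
    moreover have "(\<lambda>\<omega>. (\<Sum>s=1..i. restrict (\<lambda>j. U j \<omega>) {1..i} s) * (\<Sum>s\<in>{Suc i..Suc i}. U s \<omega>)) = (\<lambda>\<omega>. S \<omega> * U (Suc i) \<omega>)"
      unfolding S_def by (intro ext arg_cong2[where f="(*)"] sum.cong) auto
    ultimately show ?thesis by (simp only:)
  qed
  have "expectation (\<lambda>\<omega>. (\<Sum>s=1..Suc i. U s \<omega>)\<^sup>2) = expectation (\<lambda>\<omega>. (S \<omega>)\<^sup>2 + 2 * (S \<omega> * U (Suc i) \<omega>) + (U (Suc i) \<omega>)\<^sup>2)"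
    unfolding e ..
  also have "\<dots> = expectation (\<lambda>\<omega>. (S \<omega>)\<^sup>2) + 2 * expectation (\<lambda>\<omega>. S \<omega> * U (Suc i) \<omega>) + expectation (\<lambda>\<omega>. (U (Suc i) \<omega>)\<^sup>2)"
    using i1 i2 i3 by (simp add: Bochner_Integration.integral_add)
  also have "\<dots> = (\<Sum>s=1..Suc i. expectation (\<lambda>\<omega>. (U s \<omega>)\<^sup>2))"
    using Suc.IH Suc.prems cz unfolding S_def by simp
  finally show ?case .
qed


lemma tele_if:
  fixes a :: "nat \<Rightarrow> real"
  assumes "1 \<le> k"
  shows "(\<Sum>i=1..n. (a i - a (Suc i)) * (if k \<le> i then w else 0)) = (if k \<le> n then (a k - a (Suc n)) * w else 0)"
  using assms
proof (induction n)
  case 0 then show ?case by simp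
next
  case (Suc n)
  show ?case
  proof (cases "k \<le> n")
    case True then show ?thesis using Suc by (simp add: algebra_simps)
  next
    case False
    then show ?thesis using Suc by (cases "k = Suc n") (auto simp: algebra_simps)
  qed
qed

lemma abel_sum:
  fixes a v :: "nat \<Rightarrow> real"
  shows "(\<Sum>i=1..n. (a i - a (Suc i)) * (\<Sum>j=1..i. v j)) + a (Suc n) * (\<Sum>j=1..n. v j) = (\<Sum>j=1..n. a j * v j)"
proof (induction n)
  case 0 then show ?case by simp
next
  case (Suc n)
  have "(\<Sum>i=1..Suc n. (a i - a (Suc i)) * (\<Sum>j=1..i. v j)) + a (Suc (Suc n)) * (\<Sum>j=1..Suc n. v j)
      = ((\<Sum>i=1..n. (a i - a (Suc i)) * (\<Sum>j=1..i. v j)) + a (Suc n) * (\<Sum>j=1..n. v j)) + a (Suc n) * v (Suc n)"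
    by (simp add: algebra_simps)
  also have "\<dots> = (\<Sum>j=1..Suc n. a j * v j)" using Suc by simp
  finally show ?case .
qed

lemma (in prob_space) hajek_renyi:
  fixes U :: "nat \<Rightarrow> 'a \<Rightarrow> real" and c :: "nat \<Rightarrow> real"
  assumes indep: "indep_vars (\<lambda>_. borel) U UNIV"
    and meas: "\<And>s. U s \<in> borel_measurable M"
    and B: "0 \<le> B" and bnd: "\<And>s \<omega>. s \<in> {1..n} \<Longrightarrow> \<omega> \<in> space M \<Longrightarrow> \<bar>U s \<omega>\<bar> \<le> B"
    and mean0: "\<And>s. s \<in> {1..n} \<Longrightarrow> expectation (U s) = 0"
    and cpos: "\<And>t. 0 \<le> c t" and cmono: "\<And>t. c (Suc t) \<le> c t" and eps: "0 < \<epsilon>"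
  shows "\<epsilon>\<^sup>2 * prob {\<omega>\<in>space M. \<exists>t\<in>{1..n}. \<epsilon> \<le> c t * \<bar>\<Sum>s=1..t. U s \<omega>\<bar>}
     \<le> (\<Sum>t=1..n. (c t)\<^sup>2 * expectation (\<lambda>\<omega>. (U t \<omega>)\<^sup>2))"
proof -
  note [measurable] = meas
  define S where "S t \<omega> = (\<Sum>s=1..t. U s \<omega>)" for t \<omega>
  define a where "a t = (c t)\<^sup>2" for t
  have [measurable]: "S t \<in> borel_measurable M" for t unfolding S_def by measurable
  have Sb: "\<bar>S t \<omega>\<bar> \<le> real n * B" if "t \<le> n" "\<omega> \<in> space M" for t \<omega>
    unfolding S_def using that by (intro sum_bound_gen[OF _ B]) (auto intro!: bnd)
  have iS2: "integrable M (\<lambda>\<omega>. (S t \<omega>)\<^sup>2)" if "t \<le> n" for t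
    by (rule bint[where C="(real n * B)\<^sup>2"]) (auto intro!: sq_le_abs Sb that)
  have amono: "a (Suc t) \<le> a t" for t unfolding a_def using cpos cmono by (intro power_mono) auto
  have apos: "0 \<le> a t" for t unfolding a_def by simp
  define P where "P k \<omega> \<longleftrightarrow> \<epsilon> \<le> c k * \<bar>S k \<omega>\<bar> \<and> (\<forall>j\<in>{1..<k}. c j * \<bar>S j \<omega>\<bar> < \<epsilon>)" for k \<omega>
  define A where "A k = {\<omega>\<in>space M. P k \<omega>}" for k
  have Am[measurable]: "A k \<in> sets M" for k unfolding A_def P_def by measurable
  define D where "D = {\<omega>\<in>space M. \<exists>t\<in>{1..n}. \<epsilon> \<le> c t * \<bar>S t \<omega>\<bar>}"
  have Dm[measurable]: "D \<in> sets M" unfolding D_def by measurable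
  define Z where "Z \<omega> = (\<Sum>i=1..n. (a i - a (Suc i)) * (S i \<omega>)\<^sup>2) + a (Suc n) * (S n \<omega>)\<^sup>2" for \<omega>
  have [measurable]: "Z \<in> borel_measurable M" unfolding Z_def by measurable
  have Zpos: "0 \<le> Z \<omega>" for \<omega> unfolding Z_def using amono apos
    by (intro add_nonneg_nonneg sum_nonneg mult_nonneg_nonneg) auto
  have iZ: "integrable M Z" unfolding Z_def using iS2
    by (intro Bochner_Integration.integrable_add integrable_sum integrable_mult_right) auto
  have indsum: "(\<Sum>k=1..n. indicator (A k) \<omega>) = (indicator D \<omega> :: real)" for \<omega>
  proof (cases "\<omega> \<in> D")
    case False
    then have "\<omega> \<notin> A k" if "k \<in> {1..n}" for k using that unfolding A_def D_def P_def by auto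
    then show ?thesis using False by simp
  next
    case True
    define t0 where "t0 = (LEAST t. t \<in> {1..n} \<and> \<epsilon> \<le> c t * \<bar>S t \<omega>\<bar>)"
    have ex: "\<exists>t. t \<in> {1..n} \<and> \<epsilon> \<le> c t * \<bar>S t \<omega>\<bar>" using True unfolding D_def by auto
    have t0': "t0 \<in> {1..n} \<and> \<epsilon> \<le> c t0 * \<bar>S t0 \<omega>\<bar>" unfolding t0_def by (rule LeastI_ex[OF ex])
    then have t0: "t0 \<in> {1..n}" "\<epsilon> \<le> c t0 * \<bar>S t0 \<omega>\<bar>" by blast+
    have t0min: "t0 \<le> t" if "t \<in> {1..n}" "\<epsilon> \<le> c t * \<bar>S t \<omega>\<bar>" for t
      unfolding t0_def by (rule Least_le) (use that in auto)
    have w: "\<omega> \<in> space M" using True unfolding D_def by auto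
    have "indicator (A k) \<omega> = (if k = t0 then 1 else 0 :: real)" if k: "k \<in> {1..n}" for k
    proof -
      have "\<omega> \<in> A k \<longleftrightarrow> k = t0"
      proof
        assume "\<omega> \<in> A k"
        then have Pk: "P k \<omega>" unfolding A_def by auto
        then have "t0 \<le> k" using k by (intro t0min) (auto simp: P_def)
        moreover have "\<not> t0 < k" using Pk t0 unfolding P_def by (metis atLeastLessThan_iff atLeastAtMost_iff not_less)
        ultimately show "k = t0" by simp
      next
        assume kt: "k = t0"
        have "c j * \<bar>S j \<omega>\<bar> < \<epsilon>" if "j \<in> {1..<t0}" for j
        proof (rule ccontr)
          assume "\<not> c j * \<bar>S j \<omega>\<bar> < \<epsilon>"
          then have "t0 \<le> j" using that t0(1) by (intro t0min) auto
          then show False using that by auto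
        qed
        then show "\<omega> \<in> A k" using t0 w kt unfolding A_def P_def by auto
      qed
      then show ?thesis by (simp add: indicator_def)
    qed
    then have "(\<Sum>k=1..n. indicator (A k) \<omega>) = (\<Sum>k=1..n. if k = t0 then 1 else 0 :: real)"
      by (intro sum.cong) auto
    also have "\<dots> = 1" using t0(1) by simp
    finally show ?thesis using True by simp
  qed
  have step1: "\<epsilon>\<^sup>2 * prob (A k) \<le> a k * expectation (\<lambda>\<omega>. (S k \<omega>)\<^sup>2 * indicator (A k) \<omega>)"
    if k: "k \<in> {1..n}" for k
  proof -
    have "\<epsilon>\<^sup>2 * prob (A k) = expectation (\<lambda>\<omega>. \<epsilon>\<^sup>2 * indicator (A k) \<omega>)"
      by simp
    also have "\<dots> \<le> expectation (\<lambda>\<omega>. a k * ((S k \<omega>)\<^sup>2 * indicator (A k) \<omega>))"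
    proof (rule integral_mono)
      show "integrable M (\<lambda>\<omega>. \<epsilon>\<^sup>2 * indicator (A k) \<omega>)" by (intro integrable_mult_right integrable_real_indicator) (auto simp: emeasure_eq_measure)
      show "integrable M (\<lambda>\<omega>. a k * ((S k \<omega>)\<^sup>2 * indicator (A k) \<omega>))"
        using iS2[of k] k by (intro integrable_mult_right integrable_real_mult_indicator) auto
      fix \<omega>
      show "\<epsilon>\<^sup>2 * indicator (A k) \<omega> \<le> a k * ((S k \<omega>)\<^sup>2 * indicator (A k) \<omega>)"
      proof (cases "\<omega> \<in> A k")
        case True
        then have "\<epsilon> \<le> c k * \<bar>S k \<omega>\<bar>" unfolding A_def P_def by auto
        then have "\<epsilon>\<^sup>2 \<le> (c k * \<bar>S k \<omega>\<bar>)\<^sup>2" using eps by (intro power_mono) auto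
        then show ?thesis using True by (simp add: a_def power_mult_distrib)
      qed simp
    qed
    also have "\<dots> = a k * expectation (\<lambda>\<omega>. (S k \<omega>)\<^sup>2 * indicator (A k) \<omega>)" by simp
    finally show ?thesis .
  qed
  define hA where "hA k f = (if \<epsilon> \<le> c k * \<bar>\<Sum>s=1..k. f s\<bar> \<and> (\<forall>j\<in>{1..<k}. c j * \<bar>\<Sum>s=1..j. f s\<bar> < \<epsilon>) then 1 else 0 :: real)"
    for k and f :: "nat \<Rightarrow> real"
  have hAm: "hA k \<in> borel_measurable (PiM {1..k} (\<lambda>_. borel))" for k
    unfolding hA_def by measurable
  have hAeq: "hA k (restrict (\<lambda>j. U j \<omega>) {1..k}) * (\<Sum>s=1..i. U s \<omega>)\<^sup>2 = (S i \<omega>)\<^sup>2 * indicator (A k) \<omega>"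
    if "\<omega> \<in> space M" for k i \<omega>
  proof -
    have "(\<Sum>s=1..j. restrict (\<lambda>j. U j \<omega>) {1..k} s) = S j \<omega>" if "j \<le> k" for j
      unfolding S_def using that by (intro sum.cong) auto
    then have "hA k (restrict (\<lambda>j. U j \<omega>) {1..k}) = indicator (A k) \<omega>"
      using \<open>\<omega> \<in> space M\<close> unfolding hA_def A_def P_def by auto
    then show ?thesis unfolding S_def by simp
  qed
  have mono_i: "expectation (\<lambda>\<omega>. (S k \<omega>)\<^sup>2 * indicator (A k) \<omega>) \<le> expectation (\<lambda>\<omega>. (S i \<omega>)\<^sup>2 * indicator (A k) \<omega>)"
    if "k \<le> i" "i \<le> n" for k i
  proof -
    have "expectation (\<lambda>\<omega>. hA k (restrict (\<lambda>j. U j \<omega>) {1..k}) * (\<Sum>s=1..k. U s \<omega>)\<^sup>2)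
        \<le> expectation (\<lambda>\<omega>. hA k (restrict (\<lambda>j. U j \<omega>) {1..k}) * (\<Sum>s=1..i. U s \<omega>)\<^sup>2)"
      by (rule cross2[OF indep meas B bnd mean0 that hAm]) (auto simp: hA_def)
    moreover have "expectation (\<lambda>\<omega>. hA k (restrict (\<lambda>j. U j \<omega>) {1..k}) * (\<Sum>s=1..k. U s \<omega>)\<^sup>2)
       = expectation (\<lambda>\<omega>. (S k \<omega>)\<^sup>2 * indicator (A k) \<omega>)"
      by (rule Bochner_Integration.integral_cong[OF refl]) (rule hAeq)
    moreover have "expectation (\<lambda>\<omega>. hA k (restrict (\<lambda>j. U j \<omega>) {1..k}) * (\<Sum>s=1..i. U s \<omega>)\<^sup>2)
       = expectation (\<lambda>\<omega>. (S i \<omega>)\<^sup>2 * indicator (A k) \<omega>)"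
      by (rule Bochner_Integration.integral_cong[OF refl]) (rule hAeq)
    ultimately show ?thesis by simp
  qed
  have step2: "a k * expectation (\<lambda>\<omega>. (S k \<omega>)\<^sup>2 * indicator (A k) \<omega>) \<le> expectation (\<lambda>\<omega>. Z \<omega> * indicator (A k) \<omega>)"
    if k: "k \<in> {1..n}" for k
  proof -
    define w where "w = expectation (\<lambda>\<omega>. (S k \<omega>)\<^sup>2 * indicator (A k) \<omega>)"
    define E where "E i = expectation (\<lambda>\<omega>. (S i \<omega>)\<^sup>2 * indicator (A k) \<omega>)" for i
    have iE: "integrable M (\<lambda>\<omega>. (S i \<omega>)\<^sup>2 * indicator (A k) \<omega>)" if "i \<le> n" for i
      using iS2[OF that] by (intro integrable_real_mult_indicator) auto
    have "expectation (\<lambda>\<omega>. Z \<omega> * indicator (A k) \<omega>)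
        = expectation (\<lambda>\<omega>. (\<Sum>i=1..n. (a i - a (Suc i)) * ((S i \<omega>)\<^sup>2 * indicator (A k) \<omega>)) + a (Suc n) * ((S n \<omega>)\<^sup>2 * indicator (A k) \<omega>))"
      unfolding Z_def by (intro Bochner_Integration.integral_cong refl) (simp add: distrib_right sum_distrib_right mult.assoc)
    also have "\<dots> = (\<Sum>i=1..n. (a i - a (Suc i)) * E i) + a (Suc n) * E n"
      unfolding E_def using iE
      by (subst Bochner_Integration.integral_add) (auto intro!: integrable_sum simp: Bochner_Integration.integral_sum)
    also have "\<dots> \<ge> (\<Sum>i=1..n. (a i - a (Suc i)) * (if k \<le> i then w else 0)) + a (Suc n) * w"
    proof (intro add_mono sum_mono mult_left_mono)
      fix i assume i: "i \<in> {1..n}"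
      show "(if k \<le> i then w else 0) \<le> E i"
      proof (cases "k \<le> i")
        case True then show ?thesis using mono_i[of k i] i unfolding w_def E_def by auto
      next
        case False then show ?thesis unfolding E_def by (auto intro!: integral_nonneg_AE)
      qed
      show "0 \<le> a i - a (Suc i)" using amono[of i] by simp
    next
      show "w \<le> E n" using mono_i[of k n] k unfolding w_def E_def by auto
      show "0 \<le> a (Suc n)" by (rule apos)
    qed
    also have "(\<Sum>i=1..n. (a i - a (Suc i)) * (if k \<le> i then w else 0)) + a (Suc n) * w = a k * w"
      using k by (subst tele_if) (auto simp: algebra_simps)
    finally show ?thesis unfolding w_def .
  qed
  have iZA: "integrable M (\<lambda>\<omega>. Z \<omega> * indicator (A k) \<omega>)" for k
    using iZ by (intro integrable_real_mult_indicator) auto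
  have step3: "(\<Sum>k=1..n. expectation (\<lambda>\<omega>. Z \<omega> * indicator (A k) \<omega>)) \<le> expectation Z"
  proof -
    have "(\<Sum>k=1..n. expectation (\<lambda>\<omega>. Z \<omega> * indicator (A k) \<omega>)) = expectation (\<lambda>\<omega>. \<Sum>k=1..n. Z \<omega> * indicator (A k) \<omega>)"
      by (rule Bochner_Integration.integral_sum[symmetric]) (rule iZA)
    also have "\<dots> = expectation (\<lambda>\<omega>. Z \<omega> * indicator D \<omega>)"
      by (simp only: sum_distrib_left[symmetric] indsum)
    also have "\<dots> \<le> expectation Z"
    proof (rule integral_mono)
      show "integrable M (\<lambda>\<omega>. Z \<omega> * indicator D \<omega>)" using iZ by (intro integrable_real_mult_indicator) auto
      show "integrable M Z" by (rule iZ)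
      fix \<omega> show "Z \<omega> * indicator D \<omega> \<le> Z \<omega>" using Zpos[of \<omega>] by (auto simp: indicator_def)
    qed
    finally show ?thesis .
  qed
  have step4: "expectation Z = (\<Sum>t=1..n. a t * expectation (\<lambda>\<omega>. (U t \<omega>)\<^sup>2))"
  proof -
    have V: "expectation (\<lambda>\<omega>. (S i \<omega>)\<^sup>2) = (\<Sum>j=1..i. expectation (\<lambda>\<omega>. (U j \<omega>)\<^sup>2))" if "i \<le> n" for i
      unfolding S_def by (rule var_sum[OF indep meas B bnd mean0 that])
    have "expectation Z = (\<Sum>i=1..n. (a i - a (Suc i)) * expectation (\<lambda>\<omega>. (S i \<omega>)\<^sup>2)) + a (Suc n) * expectation (\<lambda>\<omega>. (S n \<omega>)\<^sup>2)"
      unfolding Z_def using iS2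
      by (subst Bochner_Integration.integral_add) (auto intro!: integrable_sum simp: Bochner_Integration.integral_sum)
    also have "\<dots> = (\<Sum>i=1..n. (a i - a (Suc i)) * (\<Sum>j=1..i. expectation (\<lambda>\<omega>. (U j \<omega>)\<^sup>2))) + a (Suc n) * (\<Sum>j=1..n. expectation (\<lambda>\<omega>. (U j \<omega>)\<^sup>2))"
      using V by (intro arg_cong2[where f="(+)"] sum.cong) auto
    also have "\<dots> = (\<Sum>t=1..n. a t * expectation (\<lambda>\<omega>. (U t \<omega>)\<^sup>2))" by (rule abel_sum)
    finally show ?thesis .
  qed
  have step5: "\<epsilon>\<^sup>2 * prob D = (\<Sum>k=1..n. \<epsilon>\<^sup>2 * prob (A k))"
  proof -
    have "prob D = expectation (indicator D)" by simp
    also have "\<dots> = expectation (\<lambda>\<omega>. \<Sum>k=1..n. indicator (A k) \<omega>)" by (simp only: indsum)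
    also have "\<dots> = (\<Sum>k=1..n. prob (A k))" by (subst Bochner_Integration.integral_sum) (auto intro!: integrable_real_indicator simp: emeasure_eq_measure)
    finally show ?thesis by (simp add: sum_distrib_left)
  qed
  have "\<epsilon>\<^sup>2 * prob D \<le> (\<Sum>k=1..n. expectation (\<lambda>\<omega>. Z \<omega> * indicator (A k) \<omega>))"
    unfolding step5 by (intro sum_mono order.trans[OF step1 step2])
  also have "\<dots> \<le> (\<Sum>t=1..n. a t * expectation (\<lambda>\<omega>. (U t \<omega>)\<^sup>2))" using step3 step4 by simp
  finally show ?thesis unfolding D_def S_def a_def .
qed



lemma sum_inv_sq_aux:
  fixes g :: real assumes g: "1 \<le> g"
  shows "(\<Sum>t=1..n. (1 / (g + real t))\<^sup>2) \<le> 1/g - 1/(g + real n)"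
proof (induction n)
  case 0 then show ?case by simp
next
  case (Suc n)
  define y where "y = g + real n + 1"
  have y: "y \<ge> 2" "g + real n = y - 1" "g + real (Suc n) = y" using g by (auto simp: y_def)
  have "(1/y)\<^sup>2 \<le> 1/(y-1) - 1/y"
    using y(1) by (simp add: field_simps power2_eq_square)
  then show ?case using Suc y by simp
qed

lemma sum_inv_sq:
  fixes g :: real assumes g: "1 \<le> g"
  shows "(\<Sum>t=1..n. (1 / (g + real t))\<^sup>2) \<le> 1/g"
proof -
  have "0 \<le> 1/(g + real n)" using g by simp
  then show ?thesis using sum_inv_sq_aux[OF g, of n] by linarith
qed

lemma sum_inv_sq_cut_aux:
  fixes g a :: real assumes g: "1 \<le> g" and a: "0 < a"
  shows "(\<Sum>t=1..n. if a \<le> g + real t then (1 / (g + real t))\<^sup>2 else 0)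
         \<le> (if a \<le> g + real n then 2/a - 1/(g + real n) else 0)"
proof (induction n)
  case 0
  have "1/g \<le> 2/a" if "a \<le> g" using that a g by (simp add: field_simps)
  then show ?case by simp
next
  case (Suc n)
  define y where "y = g + real n + 1"
  have y: "y \<ge> 2" "g + real n = y - 1" "g + real (Suc n) = y" using g by (auto simp: y_def)
  have k1: "(1/y)\<^sup>2 \<le> 1/(y-1) - 1/y"
    using y(1) by (simp add: field_simps power2_eq_square)
  have k2: "(1/y)\<^sup>2 \<le> 2/a - 1/y" if "a \<le> y"
  proof -
    have "(1/y)\<^sup>2 \<le> 1/y" using y(1) by (simp add: field_simps power2_eq_square)
    moreover have "2/y \<le> 2/a" using that a by (simp add: field_simps)
    ultimately show ?thesis by simp
  qed
  show ?case
  proof (cases "a \<le> y")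
    case False
    then show ?thesis using Suc y by simp
  next
    case True
    show ?thesis
    proof (cases "a \<le> y - 1")
      case True
      then show ?thesis using Suc y k1 \<open>a \<le> y\<close> by simp
    next
      case False
      then show ?thesis using Suc y k2 \<open>a \<le> y\<close> by simp
    qed
  qed
qed

lemma sum_inv_sq_cut:
  fixes g a :: real assumes g: "1 \<le> g" and a: "0 < a"
  shows "(\<Sum>t=1..n. if a \<le> g + real t then (1 / (g + real t))\<^sup>2 else 0) \<le> 2/a"
proof -
  have "0 \<le> 1/(g + real n)" using g by simp
  moreover note h = sum_inv_sq_cut_aux[OF g a, of n]
  ultimately show ?thesis
  proof (cases "a \<le> g + real n")
    case True
    with h have "(\<Sum>t=1..n. if a \<le> g + real t then (1 / (g + real t))\<^sup>2 else 0) \<le> 2/a - 1/(g + real n)" by simp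
    then show ?thesis using \<open>0 \<le> 1/(g + real n)\<close> by linarith
  next
    case False
    with h have "(\<Sum>t=1..n. if a \<le> g + real t then (1 / (g + real t))\<^sup>2 else 0) \<le> 0" by simp
    moreover have "0 < 2/a" using a by simp
    ultimately show ?thesis by linarith
  qed
qed

lemma pw_var:
  fixes g K x :: real assumes g: "1 \<le> g" and K: "1 \<le> K" "K \<le> g"
  shows "(\<Sum>t=1..n. (1 / (g + real t))\<^sup>2 * (if \<bar>x\<bar> \<le> g + real t then x else 0)\<^sup>2)
     \<le> K\<^sup>2 / g + 2 * (if K < \<bar>x\<bar> then \<bar>x\<bar> else 0)"
proof (cases "\<bar>x\<bar> \<le> K")
  case True
  have "(\<Sum>t=1..n. (1 / (g + real t))\<^sup>2 * (if \<bar>x\<bar> \<le> g + real t then x else 0)\<^sup>2)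
      \<le> (\<Sum>t=1..n. (1 / (g + real t))\<^sup>2 * K\<^sup>2)"
  proof (intro sum_mono mult_left_mono)
    fix t
    have "\<bar>if \<bar>x\<bar> \<le> g + real t then x else 0\<bar> \<le> K" using True K by auto
    then show "(if \<bar>x\<bar> \<le> g + real t then x else 0)\<^sup>2 \<le> K\<^sup>2"
      by (metis abs_ge_zero power2_abs power_mono)
  qed simp
  also have "\<dots> = K\<^sup>2 * (\<Sum>t=1..n. (1 / (g + real t))\<^sup>2)" by (simp add: sum_distrib_left mult.commute)
  also have "\<dots> \<le> K\<^sup>2 * (1/g)" by (intro mult_left_mono sum_inv_sq g) simp
  finally show ?thesis using True by simp
next
  case False
  then have xp: "0 < \<bar>x\<bar>" using K by simp
  have "(\<Sum>t=1..n. (1 / (g + real t))\<^sup>2 * (if \<bar>x\<bar> \<le> g + real t then x else 0)\<^sup>2)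
      = x\<^sup>2 * (\<Sum>t=1..n. if \<bar>x\<bar> \<le> g + real t then (1 / (g + real t))\<^sup>2 else 0)"
    unfolding sum_distrib_left by (intro sum.cong) auto
  also have "\<dots> \<le> x\<^sup>2 * (2 / \<bar>x\<bar>)" by (intro mult_left_mono sum_inv_sq_cut g xp) simp
  also have "\<dots> = 2 * \<bar>x\<bar>" using xp by (simp add: power2_eq_square field_simps abs_mult_self_eq)
  finally show ?thesis using False K by (simp add: add_increasing)
qed

lemma pw_count_aux:
  fixes y :: real
  shows "(\<Sum>s=1..n. if real s < y then 1 else (0::real)) \<le> real n \<and> (0 \<le> y \<longrightarrow> (\<Sum>s=1..n. if real s < y then 1 else (0::real)) \<le> y)"
proof (induction n)
  case 0 then show ?case by simp
next
  case (Suc n)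
  then show ?case by (cases "real (Suc n) < y") auto
qed

lemma pw_count:
  fixes g K x :: real assumes g: "1 \<le> g" and K: "K \<le> g"
  shows "(\<Sum>s=1..n. if g + real s < \<bar>x\<bar> then 1 else (0::real)) \<le> (if K < \<bar>x\<bar> then \<bar>x\<bar> else 0)"
proof (cases "g + 1 < \<bar>x\<bar>")
  case False
  then have "(\<Sum>s=1..n. if g + real s < \<bar>x\<bar> then 1 else (0::real)) = 0"
    by (intro sum.neutral) auto
  then show ?thesis by simp
next
  case True
  have "(\<Sum>s=1..n. if g + real s < \<bar>x\<bar> then 1 else (0::real)) = (\<Sum>s=1..n. if real s < \<bar>x\<bar> - g then 1 else (0::real))"
    by (intro sum.cong) auto
  also have "\<dots> \<le> \<bar>x\<bar> - g" using pw_count_aux[where n=n and y="\<bar>x\<bar> - g"] True g by auto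
  finally show ?thesis using True g K by auto
qed

lemma powr_facts:
  fixes g :: real assumes g: "1 \<le> g"
  shows "1 \<le> g powr (1/3)" "g powr (1/3) \<le> g" "(g powr (1/3))\<^sup>2 / g = g powr (-1/3)"
proof -
  show "1 \<le> g powr (1/3)" using g by (simp add: ge_one_powr_ge_zero)
  show "g powr (1/3) \<le> g" using g powr_mono[of "1/3" 1 g] by simp
  have "(g powr (1/3))\<^sup>2 = g powr (2/3)" using g by (simp add: powr_powr[symmetric] powr_realpow[symmetric] power2_eq_square powr_add[symmetric])
  moreover have "g powr (2/3) / g = g powr (-1/3)"
  proof -
    have "g powr (-1/3) = g powr (2/3 + (-1))" by simp
    also have "\<dots> = g powr (2/3) * g powr (-1)" by (rule powr_add)
    also have "g powr (-1) = 1 / g" using g by (simp add: powr_minus_divide)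
    finally show ?thesis by simp
  qed
  ultimately show "(g powr (1/3))\<^sup>2 / g = g powr (-1/3)" by simp
qed



lemma count_le: "\<bar>\<Sum>s=1..n. if P s then 1 else (0::real)\<bar> \<le> real n"
proof -
  have "0 \<le> (\<Sum>s=1..n. if P s then 1 else (0::real))" by (intro sum_nonneg) auto
  moreover have "(\<Sum>s=1..n. if P s then 1 else (0::real)) \<le> (\<Sum>s=1..n. 1)" by (intro sum_mono) auto
  ultimately show ?thesis by simp
qed

lemma (in prob_space) part1:
  fixes X :: "nat \<Rightarrow> 'a \<Rightarrow> real" and \<gamma> \<epsilon> :: real
  assumes meas: "\<And>t. X t \<in> borel_measurable M"
    and indep: "indep_vars (\<lambda>_. borel) X UNIV"
    and dist: "\<And>t. distr M borel (X t) = distr M borel (X 1)"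
    and int: "integrable M (X 1)"
    and mean: "expectation (X 1) = 0"
    and eps: "0 < \<epsilon>" and g: "1 \<le> \<gamma>"
    and rle: "tail_moment M (X 1) (\<gamma> powr (1/3)) \<le> \<epsilon>"
  shows "prob {\<omega>\<in>space M. \<exists>t::nat. \<bar>\<Sum>s=1..t. X s \<omega>\<bar> / (\<gamma> + real t) > 2 * \<epsilon>}
      \<le> 8 / \<epsilon>\<^sup>2 * \<gamma> powr (-1/3) + (16 / \<epsilon>\<^sup>2 + 2) * tail_moment M (X 1) (\<gamma> powr (1/3))"
proof -
  note [measurable] = meas
  define K where "K = \<gamma> powr (1/3)"
  have K: "1 \<le> K" "K \<le> \<gamma>" "K\<^sup>2 / \<gamma> = \<gamma> powr (-1/3)" unfolding K_def using powr_facts[OF g] by auto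
  define r where "r = tail_moment M (X 1) K"
  define tl where "tl x = (if K < \<bar>x\<bar> then \<bar>x\<bar> else 0)" for x :: real
  have tlm[measurable]: "tl \<in> borel_measurable borel" unfolding tl_def by measurable
  have r_eq: "r = expectation (\<lambda>\<omega>. tl (X 1 \<omega>))"
    unfolding r_def tail_moment_def tl_def by (intro Bochner_Integration.integral_cong refl) (auto simp: indicator_def)
  have itl: "integrable M (\<lambda>\<omega>. tl (X 1 \<omega>))"
    by (rule Bochner_Integration.integrable_bound[OF integrable_abs[OF int]]) (auto simp: tl_def)
  have r0: "0 \<le> r" unfolding r_eq by (intro Bochner_Integration.integral_nonneg) (auto simp: tl_def)
  have rle': "r \<le> \<epsilon>" using rle unfolding r_def K_def .
  have dtr: "expectation (\<lambda>\<omega>. f (X s \<omega>)) = expectation (\<lambda>\<omega>. f (X 1 \<omega>))"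
    if fm: "f \<in> borel_measurable borel" for f :: "real \<Rightarrow> real" and s
  proof -
    have "expectation (\<lambda>\<omega>. f (X s \<omega>)) = integral\<^sup>L (distr M borel (X s)) f"
      by (rule integral_distr[symmetric, OF meas fm])
    also have "\<dots> = integral\<^sup>L (distr M borel (X 1)) f" using dist[of s] by (rule arg_cong[where f="\<lambda>N. integral\<^sup>L N f"])
    also have "\<dots> = expectation (\<lambda>\<omega>. f (X 1 \<omega>))"
      by (rule integral_distr[OF meas fm])
    finally show ?thesis .
  qed
  define T where "T s x = (if \<bar>x\<bar> \<le> \<gamma> + real s then x else 0)" for s :: nat and x :: real
  have Tm[measurable]: "T s \<in> borel_measurable borel" for s unfolding T_def by measurable
  have Tb: "\<bar>T s x\<bar> \<le> \<gamma> + real s" for s x unfolding T_def using g by auto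
  define m where "m s = expectation (\<lambda>\<omega>. T s (X s \<omega>))" for s
  define U where "U s \<omega> = T s (X s \<omega>) - m s" for s \<omega>
  have Um[measurable]: "U s \<in> borel_measurable M" for s unfolding U_def by measurable
  have intT: "integrable M (\<lambda>\<omega>. T s (X s \<omega>))" for s
    by (rule bint[where C="\<gamma> + real s"]) (auto intro: Tb)
  have mb: "\<bar>m s\<bar> \<le> \<gamma> + real s" for s
  proof -
    have "\<bar>m s\<bar> \<le> expectation (\<lambda>\<omega>. \<bar>T s (X s \<omega>)\<bar>)" unfolding m_def by (rule integral_abs_bound)
    also have "\<dots> \<le> expectation (\<lambda>\<omega>. \<gamma> + real s)"
      using intT by (intro integral_mono) (auto intro: Tb)
    also have "\<dots> = \<gamma> + real s" by (simp add: prob_space)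
    finally show ?thesis .
  qed
  have indepU: "indep_vars (\<lambda>_. borel) U UNIV"
  proof -
    have "indep_vars (\<lambda>_. borel) (\<lambda>s \<omega>. (\<lambda>x. T s x - m s) (X s \<omega>)) UNIV"
      by (rule indep_vars_compose2[OF indep]) measurable
    then show ?thesis unfolding U_def by simp
  qed
  have mean0: "expectation (U s) = 0" for s
    unfolding U_def using intT by (simp add: Bochner_Integration.integral_diff m_def prob_space)
  have mr: "\<bar>m s\<bar> \<le> r" if s: "1 \<le> s" for s
  proof -
    have m1: "m s = expectation (\<lambda>\<omega>. T s (X 1 \<omega>))" unfolding m_def by (rule dtr) simp
    have iT1: "integrable M (\<lambda>\<omega>. T s (X 1 \<omega>))"
      by (rule bint[where C="\<gamma> + real s"]) (auto intro: Tb)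
    have "0 = expectation (\<lambda>\<omega>. T s (X 1 \<omega>) + (X 1 \<omega> - T s (X 1 \<omega>)))" using mean by simp
    also have "\<dots> = m s + expectation (\<lambda>\<omega>. X 1 \<omega> - T s (X 1 \<omega>))"
      using iT1 int m1 by (simp add: Bochner_Integration.integral_add Bochner_Integration.integral_diff)
    finally have "\<bar>m s\<bar> = \<bar>expectation (\<lambda>\<omega>. X 1 \<omega> - T s (X 1 \<omega>))\<bar>" by simp
    also have "\<dots> \<le> expectation (\<lambda>\<omega>. \<bar>X 1 \<omega> - T s (X 1 \<omega>)\<bar>)" by (rule integral_abs_bound)
    also have "\<dots> \<le> expectation (\<lambda>\<omega>. tl (X 1 \<omega>))"
    proof (rule integral_mono)
      show "integrable M (\<lambda>\<omega>. \<bar>X 1 \<omega> - T s (X 1 \<omega>)\<bar>)" using int iT1 by auto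
      show "integrable M (\<lambda>\<omega>. tl (X 1 \<omega>))" by (rule itl)
      fix \<omega>
      show "\<bar>X 1 \<omega> - T s (X 1 \<omega>)\<bar> \<le> tl (X 1 \<omega>)"
        unfolding T_def tl_def using K s by auto
    qed
    finally show ?thesis unfolding r_eq .
  qed
  have EU2: "expectation (\<lambda>\<omega>. (U s \<omega>)\<^sup>2) \<le> expectation (\<lambda>\<omega>. (T s (X 1 \<omega>))\<^sup>2)" for s
  proof -
    have iT2: "integrable M (\<lambda>\<omega>. (T s (X s \<omega>))\<^sup>2)"
      by (rule bint[where C="(\<gamma> + real s)\<^sup>2"]) (auto intro!: sq_le_abs Tb)
    have "(\<lambda>\<omega>. (U s \<omega>)\<^sup>2) = (\<lambda>\<omega>. (T s (X s \<omega>))\<^sup>2 - 2 * m s * T s (X s \<omega>) + (m s)\<^sup>2)"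
      unfolding U_def by (simp add: power2_eq_square algebra_simps)
    then have "expectation (\<lambda>\<omega>. (U s \<omega>)\<^sup>2) = expectation (\<lambda>\<omega>. (T s (X s \<omega>))\<^sup>2) - 2 * m s * m s + (m s)\<^sup>2"
      using iT2 intT[of s] by (simp add: Bochner_Integration.integral_add Bochner_Integration.integral_diff prob_space m_def)
    also have "\<dots> \<le> expectation (\<lambda>\<omega>. (T s (X s \<omega>))\<^sup>2)" by (simp add: power2_eq_square)
    also have "\<dots> = expectation (\<lambda>\<omega>. (T s (X 1 \<omega>))\<^sup>2)" by (rule dtr) simp
    finally show ?thesis .
  qed
  define c where "c t = 1 / (\<gamma> + real t)" for t :: nat
  define G where "G n = {\<omega>\<in>space M. \<exists>t\<in>{1..n}. \<epsilon> \<le> c t * \<bar>\<Sum>s=1..t. U s \<omega>\<bar>}" for n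
  define F where "F n = {\<omega>\<in>space M. \<exists>s\<in>{1..n}. \<gamma> + real s < \<bar>X s \<omega>\<bar>}" for n
  define E where "E n = {\<omega>\<in>space M. \<exists>t\<le>n. \<bar>\<Sum>s=1..t. X s \<omega>\<bar> / (\<gamma> + real t) > 2 * \<epsilon>}" for n
  have [measurable]: "G n \<in> sets M" "F n \<in> sets M" "E n \<in> sets M" for n
    unfolding G_def F_def E_def by measurable
  have PG: "\<epsilon>\<^sup>2 * prob (G n) \<le> K\<^sup>2 / \<gamma> + 2 * r" for n
  proof -
    have "\<epsilon>\<^sup>2 * prob (G n) \<le> (\<Sum>t=1..n. (c t)\<^sup>2 * expectation (\<lambda>\<omega>. (U t \<omega>)\<^sup>2))"
      unfolding G_def
    proof (rule hajek_renyi[OF indepU Um _ _ mean0 _ _ eps, where B="2 * (\<gamma> + real n)"])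
      show "0 \<le> 2 * (\<gamma> + real n)" using g by simp
      fix s \<omega> assume s: "s \<in> {1..n}" "\<omega> \<in> space M"
      have "\<bar>U s \<omega>\<bar> \<le> \<bar>T s (X s \<omega>)\<bar> + \<bar>m s\<bar>" unfolding U_def by linarith
      also have "\<dots> \<le> 2 * (\<gamma> + real s)" using add_mono[OF Tb[of s "X s \<omega>"] mb[of s]] by (simp add: algebra_simps)
      also have "\<dots> \<le> 2 * (\<gamma> + real n)" using s by simp
      finally show "\<bar>U s \<omega>\<bar> \<le> 2 * (\<gamma> + real n)" .
    next
      fix t show "0 \<le> c t" unfolding c_def using g by simp
      show "c (Suc t) \<le> c t" unfolding c_def using g by (simp add: frac_le)
    qed
    also have "\<dots> \<le> (\<Sum>t=1..n. (c t)\<^sup>2 * expectation (\<lambda>\<omega>. (T t (X 1 \<omega>))\<^sup>2))"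
      by (intro sum_mono mult_left_mono EU2) simp
    also have "\<dots> = expectation (\<lambda>\<omega>. \<Sum>t=1..n. (c t)\<^sup>2 * (T t (X 1 \<omega>))\<^sup>2)"
    proof -
      have "integrable M (\<lambda>\<omega>. (T t (X 1 \<omega>))\<^sup>2)" for t
        by (rule bint[where C="(\<gamma> + real t)\<^sup>2"]) (auto intro!: sq_le_abs Tb)
      then show ?thesis by (simp add: Bochner_Integration.integral_sum)
    qed
    also have "\<dots> \<le> expectation (\<lambda>\<omega>. K\<^sup>2 / \<gamma> + 2 * tl (X 1 \<omega>))"
    proof (rule integral_mono)
      show "integrable M (\<lambda>\<omega>. \<Sum>t=1..n. (c t)\<^sup>2 * (T t (X 1 \<omega>))\<^sup>2)"
      proof (intro Bochner_Integration.integrable_sum integrable_mult_right)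
        fix t show "integrable M (\<lambda>\<omega>. (T t (X 1 \<omega>))\<^sup>2)"
          by (rule bint[where C="(\<gamma> + real t)\<^sup>2"]) (auto intro!: sq_le_abs Tb)
      qed
      show "integrable M (\<lambda>\<omega>. K\<^sup>2 / \<gamma> + 2 * tl (X 1 \<omega>))" using itl by auto
      fix \<omega>
      show "(\<Sum>t=1..n. (c t)\<^sup>2 * (T t (X 1 \<omega>))\<^sup>2) \<le> K\<^sup>2 / \<gamma> + 2 * tl (X 1 \<omega>)"
        unfolding c_def T_def tl_def by (rule pw_var[OF g K(1) K(2)])
    qed
    also have "\<dots> = K\<^sup>2 / \<gamma> + 2 * r" using itl r_eq by (simp add: prob_space)
    finally show ?thesis .
  qed
  have PF: "prob (F n) \<le> r" for n
  proof -
    define A where "A s = {\<omega>\<in>space M. \<gamma> + real s < \<bar>X s \<omega>\<bar>}" for s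
    have [measurable]: "A s \<in> sets M" for s unfolding A_def by measurable
    have "F n = (\<Union>s\<in>{1..n}. A s)" unfolding F_def A_def by auto
    then have "prob (F n) \<le> (\<Sum>s=1..n. prob (A s))"
      by (simp add: finite_measure_subadditive_finite image_subset_iff)
    also have "\<dots> = (\<Sum>s=1..n. expectation (\<lambda>\<omega>. (\<lambda>x. if \<gamma> + real s < \<bar>x\<bar> then 1 else 0) (X 1 \<omega>)))"
    proof (intro sum.cong refl)
      fix s
      have "prob (A s) = expectation (indicator (A s))" by simp
      also have "\<dots> = expectation (\<lambda>\<omega>. (\<lambda>x. if \<gamma> + real s < \<bar>x\<bar> then 1 else 0) (X s \<omega>))"
        by (intro Bochner_Integration.integral_cong refl) (auto simp: A_def indicator_def)
      also have "\<dots> = expectation (\<lambda>\<omega>. (\<lambda>x. if \<gamma> + real s < \<bar>x\<bar> then 1 else 0) (X 1 \<omega>))"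
        by (rule dtr) measurable
      finally show "prob (A s) = \<dots>" .
    qed
    also have "\<dots> = expectation (\<lambda>\<omega>. \<Sum>s=1..n. (if \<gamma> + real s < \<bar>X 1 \<omega>\<bar> then 1 else 0))"
    proof -
      have "integrable M (\<lambda>\<omega>. (if \<gamma> + real s < \<bar>X 1 \<omega>\<bar> then 1 else 0 :: real))" for s
        by (rule bint[where C=1]) auto
      then show ?thesis by (simp add: Bochner_Integration.integral_sum)
    qed
    also have "\<dots> \<le> expectation (\<lambda>\<omega>. tl (X 1 \<omega>))"
    proof (rule integral_mono)
      show "integrable M (\<lambda>\<omega>. \<Sum>s=1..n. (if \<gamma> + real s < \<bar>X 1 \<omega>\<bar> then 1 else 0 :: real))"
        by (rule bint[where C="real n"], measurable, rule count_le)
      show "integrable M (\<lambda>\<omega>. tl (X 1 \<omega>))" by (rule itl)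
      fix \<omega> show "(\<Sum>s=1..n. (if \<gamma> + real s < \<bar>X 1 \<omega>\<bar> then 1 else 0 :: real)) \<le> tl (X 1 \<omega>)"
        unfolding tl_def by (rule pw_count[OF g K(2)])
    qed
    finally show ?thesis unfolding r_eq .
  qed
  have sub: "E n \<subseteq> F n \<union> G n" for n
  proof
    fix \<omega> assume w: "\<omega> \<in> E n"
    show "\<omega> \<in> F n \<union> G n"
    proof (cases "\<omega> \<in> F n")
      case True then show ?thesis by simp
    next
      case False
      from w obtain t where t: "t \<le> n" "\<bar>\<Sum>s=1..t. X s \<omega>\<bar> / (\<gamma> + real t) > 2 * \<epsilon>" and sp: "\<omega> \<in> space M"
        unfolding E_def by auto
      have gt: "0 < \<gamma> + real t" using g by simp
      have big: "2 * \<epsilon> * (\<gamma> + real t) < \<bar>\<Sum>s=1..t. X s \<omega>\<bar>" using t(2) gt by (simp add: field_simps)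
      have t1: "1 \<le> t"
      proof (rule ccontr)
        assume "\<not> 1 \<le> t" then have "t = 0" by simp
        moreover have "0 < 2 * \<epsilon> * (\<gamma> + real t)" using eps gt by simp
        ultimately show False using big by simp
      qed
      have Xe: "X s \<omega> = U s \<omega> + m s" if "s \<in> {1..t}" for s
      proof -
        have "\<not> \<gamma> + real s < \<bar>X s \<omega>\<bar>" using False sp that t(1) unfolding F_def by auto
        then show ?thesis unfolding U_def T_def by simp
      qed
      have "(\<Sum>s=1..t. X s \<omega>) = (\<Sum>s=1..t. U s \<omega>) + (\<Sum>s=1..t. m s)"
        using Xe by (simp add: sum.distrib)
      moreover have "\<bar>\<Sum>s=1..t. m s\<bar> \<le> real t * \<epsilon>"
      proof -
        have "\<bar>\<Sum>s=1..t. m s\<bar> \<le> (\<Sum>s=1..t. \<bar>m s\<bar>)" by (rule sum_abs)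
        also have "\<dots> \<le> (\<Sum>s=1..t. \<epsilon>)" using mr rle' by (intro sum_mono) (auto intro: order.trans)
        finally show ?thesis by simp
      qed
      ultimately have A: "\<bar>\<Sum>s=1..t. X s \<omega>\<bar> \<le> \<bar>\<Sum>s=1..t. U s \<omega>\<bar> + real t * \<epsilon>"
        by (metis abs_triangle_ineq add_left_mono order_trans)
      have e1: "2 * \<epsilon> * (\<gamma> + real t) = 2 * (\<epsilon> * \<gamma>) + 2 * (\<epsilon> * real t)"
        "\<epsilon> * (\<gamma> + real t) = \<epsilon> * \<gamma> + \<epsilon> * real t" "real t * \<epsilon> = \<epsilon> * real t"
        by (simp_all add: algebra_simps)
      have e2: "0 \<le> \<epsilon> * \<gamma>" using eps g by simp
      have "\<epsilon> * (\<gamma> + real t) \<le> \<bar>\<Sum>s=1..t. U s \<omega>\<bar>"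
        using A big e1 e2 by linarith
      then have "\<epsilon> \<le> c t * \<bar>\<Sum>s=1..t. U s \<omega>\<bar>" unfolding c_def using gt by (simp add: field_simps)
      then show ?thesis using t1 t(1) sp unfolding G_def by auto
    qed
  qed
  have PE: "prob (E n) \<le> r + (K\<^sup>2 / \<gamma> + 2 * r) / \<epsilon>\<^sup>2" for n
  proof -
    have "prob (E n) \<le> prob (F n \<union> G n)" using sub by (intro finite_measure_mono) auto
    also have "\<dots> \<le> prob (F n) + prob (G n)" by (intro measure_Un_le) auto
    also have "prob (G n) \<le> (K\<^sup>2 / \<gamma> + 2 * r) / \<epsilon>\<^sup>2" using PG[of n] eps by (simp add: field_simps)
    finally show ?thesis using PF[of n] by simp
  qed
  define Eall where "Eall = {\<omega>\<in>space M. \<exists>t::nat. \<bar>\<Sum>s=1..t. X s \<omega>\<bar> / (\<gamma> + real t) > 2 * \<epsilon>}"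
  have "Eall = (\<Union>n. E n)"
  proof
    show "Eall \<subseteq> (\<Union>n. E n)"
    proof
      fix \<omega> assume "\<omega> \<in> Eall"
      then obtain t where t: "\<bar>\<Sum>s=1..t. X s \<omega>\<bar> / (\<gamma> + real t) > 2 * \<epsilon>" and sp: "\<omega> \<in> space M"
        unfolding Eall_def by auto
      then have "\<omega> \<in> E t" unfolding E_def by blast
      then show "\<omega> \<in> (\<Union>n. E n)" by blast
    qed
    show "(\<Union>n. E n) \<subseteq> Eall" unfolding Eall_def E_def by blast
  qed
  moreover have "(\<lambda>n. prob (E n)) \<longlonglongrightarrow> prob (\<Union>n. E n)"
  proof (rule finite_Lim_measure_incseq)
    show "range E \<subseteq> sets M" by auto
    show "incseq E" unfolding incseq_def
    proof (intro allI impI subsetI)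
      fix m n \<omega> assume mn: "m \<le> n" and w: "\<omega> \<in> E m"
      from w obtain t where t: "t \<le> m" "\<bar>\<Sum>s=1..t. X s \<omega>\<bar> / (\<gamma> + real t) > 2 * \<epsilon>" and sp: "\<omega> \<in> space M"
        unfolding E_def by auto
      have "t \<le> n" using t(1) mn by simp
      then show "\<omega> \<in> E n" unfolding E_def using t(2) sp by blast
    qed
  qed
  ultimately have "prob Eall \<le> r + (K\<^sup>2 / \<gamma> + 2 * r) / \<epsilon>\<^sup>2"
    using PE by (metis LIMSEQ_le_const2)
  also have "\<dots> \<le> 8 / \<epsilon>\<^sup>2 * \<gamma> powr (-1/3) + (16 / \<epsilon>\<^sup>2 + 2) * r"
  proof -
    define p where "p = \<gamma> powr (-1/3)"
    have p0: "0 \<le> p" unfolding p_def by simp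
    have "(K\<^sup>2 / \<gamma> + 2 * r) / \<epsilon>\<^sup>2 = p / \<epsilon>\<^sup>2 + 2 * (r / \<epsilon>\<^sup>2)" using K(3) unfolding p_def by (simp add: add_divide_distrib)
    moreover have "8 / \<epsilon>\<^sup>2 * p = 8 * (p / \<epsilon>\<^sup>2)" "(16 / \<epsilon>\<^sup>2 + 2) * r = 16 * (r / \<epsilon>\<^sup>2) + 2 * r" by (simp_all add: algebra_simps)
    moreover have "0 \<le> p / \<epsilon>\<^sup>2" "0 \<le> r / \<epsilon>\<^sup>2" using p0 r0 by simp_all
    ultimately show ?thesis using r0 unfolding p_def by linarith
  qed
  finally show ?thesis unfolding Eall_def r_def K_def .
qed


lemma tail_nonneg: "0 \<le> tail_moment M Y K"
  unfolding tail_moment_def by (intro Bochner_Integration.integral_nonneg) (auto simp: indicator_def)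

lemma (in prob_space) part2:
  fixes X :: "nat \<Rightarrow> 'a \<Rightarrow> real" and \<epsilon> :: real and k :: nat
  assumes meas: "\<And>t. X t \<in> borel_measurable M"
    and indep: "indep_vars (\<lambda>_. borel) X UNIV"
    and dist: "\<And>t. distr M borel (X t) = distr M borel (X 1)"
    and int: "integrable M (X 1)"
    and mean: "expectation (X 1) = 0"
    and eps: "0 < \<epsilon>"
    and rle: "tail_moment M (X 1) (real k powr (1/3)) \<le> \<epsilon>"
  shows "prob {\<omega>\<in>space M. \<bar>\<Sum>s=1..k. X s \<omega>\<bar> / real k > \<epsilon>}
      \<le> 128 / \<epsilon>\<^sup>2 * real k powr (-1/3) + (256 / \<epsilon>\<^sup>2 + 2) * tail_moment M (X 1) (real k powr (1/3))"
proof -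
  note [measurable] = meas
  define r where "r = tail_moment M (X 1) (real k powr (1/3))"
  have r0: "0 \<le> r" unfolding r_def by (rule tail_nonneg)
  have p0: "0 \<le> real k powr (-1/3)" by simp
  show ?thesis
  proof (cases "k = 0")
    case True
    then have e: "{\<omega>\<in>space M. \<bar>\<Sum>s=1..k. X s \<omega>\<bar> / real k > \<epsilon>} = {}" using eps by auto
    have "0 \<le> 128 / \<epsilon>\<^sup>2 * real k powr (-1/3) + (256 / \<epsilon>\<^sup>2 + 2) * r"
      using r0 p0 by (intro add_nonneg_nonneg mult_nonneg_nonneg) auto
    then show ?thesis unfolding e r_def by simp
  next
    case False
    then have k1: "1 \<le> real k" by simp
    show ?thesis
    proof (cases "r \<le> \<epsilon> / 4")
      case True
      have e4: "0 < \<epsilon> / 4" using eps by simp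
      have P: "prob {\<omega>\<in>space M. \<exists>t::nat. \<bar>\<Sum>s=1..t. X s \<omega>\<bar> / (real k + real t) > 2 * (\<epsilon>/4)}
          \<le> 8 / (\<epsilon>/4)\<^sup>2 * real k powr (-1/3) + (16 / (\<epsilon>/4)\<^sup>2 + 2) * r"
        unfolding r_def by (rule part1[OF meas indep dist int mean e4 k1]) (use True in \<open>simp add: r_def\<close>)
      have sub: "{\<omega>\<in>space M. \<bar>\<Sum>s=1..k. X s \<omega>\<bar> / real k > \<epsilon>}
          \<subseteq> {\<omega>\<in>space M. \<exists>t::nat. \<bar>\<Sum>s=1..t. X s \<omega>\<bar> / (real k + real t) > 2 * (\<epsilon>/4)}"
      proof
        fix \<omega> assume "\<omega> \<in> {\<omega>\<in>space M. \<bar>\<Sum>s=1..k. X s \<omega>\<bar> / real k > \<epsilon>}"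
        then have w: "\<omega> \<in> space M" "\<bar>\<Sum>s=1..k. X s \<omega>\<bar> / real k > \<epsilon>" by auto
        have "\<bar>\<Sum>s=1..k. X s \<omega>\<bar> / (real k + real k) = (\<bar>\<Sum>s=1..k. X s \<omega>\<bar> / real k) / 2" by simp
        also have "\<dots> > 2 * (\<epsilon>/4)" using w(2) by simp
        finally show "\<omega> \<in> {\<omega>\<in>space M. \<exists>t::nat. \<bar>\<Sum>s=1..t. X s \<omega>\<bar> / (real k + real t) > 2 * (\<epsilon>/4)}"
          using w(1) by blast
      qed
      have "prob {\<omega>\<in>space M. \<bar>\<Sum>s=1..k. X s \<omega>\<bar> / real k > \<epsilon>}
          \<le> prob {\<omega>\<in>space M. \<exists>t::nat. \<bar>\<Sum>s=1..t. X s \<omega>\<bar> / (real k + real t) > 2 * (\<epsilon>/4)}"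
        by (rule finite_measure_mono[OF sub]) measurable
      also note P
      also have c1: "8 / (\<epsilon>/4)\<^sup>2 = 128 / \<epsilon>\<^sup>2" and c2: "16 / (\<epsilon>/4)\<^sup>2 + 2 = 256 / \<epsilon>\<^sup>2 + 2"
        by (simp_all add: power_divide)
      then have "8 / (\<epsilon>/4)\<^sup>2 * real k powr (-1/3) + (16 / (\<epsilon>/4)\<^sup>2 + 2) * r
          = 128 / \<epsilon>\<^sup>2 * real k powr (-1/3) + (256 / \<epsilon>\<^sup>2 + 2) * r" by (simp only:)
      finally show ?thesis unfolding r_def .
    next
      case False
      have "1 \<le> (256 / \<epsilon>\<^sup>2 + 2) * (\<epsilon> / 4)"
      proof -
        have "(256 / \<epsilon>\<^sup>2 + 2) * (\<epsilon> / 4) = 64 / \<epsilon> + \<epsilon> / 2"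
          using eps by (simp add: field_simps power2_eq_square)
        also have "\<dots> \<ge> 1"
        proof (cases "\<epsilon> \<ge> 2")
          case True
          have "0 \<le> 64 / \<epsilon>" using eps by simp
          moreover have "1 \<le> \<epsilon> / 2" using True by simp
          ultimately show ?thesis by linarith
        next
          case False
          then have "64 / \<epsilon> \<ge> 1" using eps by (simp add: field_simps)
          moreover have "0 \<le> \<epsilon> / 2" using eps by simp
          ultimately show ?thesis by linarith
        qed
        finally show ?thesis .
      qed
      also have "\<dots> \<le> (256 / \<epsilon>\<^sup>2 + 2) * r" using False by (intro mult_left_mono) (auto)
      finally have "1 \<le> 128 / \<epsilon>\<^sup>2 * real k powr (-1/3) + (256 / \<epsilon>\<^sup>2 + 2) * r"
        using p0 by (simp add: add_increasing)
      then show ?thesis unfolding r_def using prob_le_1 by (meson order_trans)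
    qed
  qed
qed


theorem mainTheorem7:
  fixes M :: "'a measure" and X :: "nat \<Rightarrow> 'a \<Rightarrow> real"
  assumes "prob_space M"
    and "\<And>t. X t \<in> borel_measurable M"
    and "prob_space.indep_vars M (\<lambda>_. borel) X UNIV"
    and "\<And>t. distr M borel (X t) = distr M borel (X 1)"
    and "integrable M (X 1)"
    and "(\<integral>\<omega>. X 1 \<omega> \<partial>M) = 0"
  shows "(\<forall>\<epsilon>>0. \<forall>\<gamma>::real. \<gamma> \<ge> 1 \<longrightarrow> tail_moment M (X 1) (\<gamma> powr (1/3)) \<le> \<epsilon> \<longrightarrow>
            measure M {\<omega>\<in>space M. \<exists>t::nat. \<bar>\<Sum>s=1..t. X s \<omega>\<bar> / (\<gamma> + real t) > 2 * \<epsilon>}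
              \<le> 8 / \<epsilon>\<^sup>2 * \<gamma> powr (-1/3)
                 + (16 / \<epsilon>\<^sup>2 + 2) * tail_moment M (X 1) (\<gamma> powr (1/3)))
       \<and> (\<forall>\<epsilon>>0. \<forall>k::nat. tail_moment M (X 1) (real k powr (1/3)) \<le> \<epsilon> \<longrightarrow>
            measure M {\<omega>\<in>space M. \<bar>\<Sum>s=1..k. X s \<omega>\<bar> / real k > \<epsilon>}
              \<le> 128 / \<epsilon>\<^sup>2 * real k powr (-1/3)
                 + (256 / \<epsilon>\<^sup>2 + 2) * tail_moment M (X 1) (real k powr (1/3)))"
proof -
  interpret P: prob_space M by fact
  have ind: "P.indep_vars (\<lambda>_. borel) X UNIV" using assms(3) .
  have A: "measure M {\<omega>\<in>space M. \<exists>t::nat. \<bar>\<Sum>s=1..t. X s \<omega>\<bar> / (\<gamma> + real t) > 2 * \<epsilon>}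
              \<le> 8 / \<epsilon>\<^sup>2 * \<gamma> powr (-1/3) + (16 / \<epsilon>\<^sup>2 + 2) * tail_moment M (X 1) (\<gamma> powr (1/3))"
    if "0 < \<epsilon>" "1 \<le> \<gamma>" "tail_moment M (X 1) (\<gamma> powr (1/3)) \<le> \<epsilon>" for \<epsilon> \<gamma> :: real
    by (rule P.part1[OF assms(2) ind assms(4) assms(5) assms(6) that])
  have B: "measure M {\<omega>\<in>space M. \<bar>\<Sum>s=1..k. X s \<omega>\<bar> / real k > \<epsilon>}
              \<le> 128 / \<epsilon>\<^sup>2 * real k powr (-1/3) + (256 / \<epsilon>\<^sup>2 + 2) * tail_moment M (X 1) (real k powr (1/3))"
    if "0 < \<epsilon>" "tail_moment M (X 1) (real k powr (1/3)) \<le> \<epsilon>" for \<epsilon> :: real and k :: nat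
    by (rule P.part2[OF assms(2) ind assms(4) assms(5) assms(6) that])
  show ?thesis using A B by blast
qed

end
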